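(* Let $V=\{0,\alpha,\beta\}$ be the three-element ordered set with least element $0$ and two incomparable maximal elements $\alpha,\beta$. There is no algebra $A$ such that the ordered set $(\mathrm{Princ}(A),\subseteq)$ is isomorphic to $V$.
   Context: For an algebra $A$, $\mathrm{Princ}(A)$ denotes the set of principal congruences $\mathrm{con}(a,b)$ ($a,b\in A$) of $A$, ordered by inclusion, where $\mathrm{con}(a,b)$ is the least congruence of $A$ containing $(a,b)$. *)

theory Defs
  imports Main
begin

text \<open>Universal algebras: a carrier set A together with a set F of finitary
operations, each given as a pair (n, f) of its arity n and a function
f on argument lists (only lists of length n over A matter).\<close>

definition algebra :: "'a set \<Rightarrow> (nat \<times> ('a list \<Rightarrow> 'a)) set \<Rightarrow> bool" where
  "algebra A F \<longleftrightarrow>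
     (\<forall>(n, f) \<in> F. \<forall>xs. set xs \<subseteq> A \<and> length xs = n \<longrightarrow> f xs \<in> A)"

definition congruence :: "'a set \<Rightarrow> (nat \<times> ('a list \<Rightarrow> 'a)) set \<Rightarrow> ('a \<times> 'a) set \<Rightarrow> bool" where
  "congruence A F \<theta> \<longleftrightarrow> equiv A \<theta> \<and>
     (\<forall>(n, f) \<in> F. \<forall>xs ys. set xs \<subseteq> A \<and> set ys \<subseteq> A \<and> length xs = n \<and> length ys = n
        \<and> list_all2 (\<lambda>x y. (x, y) \<in> \<theta>) xs ys \<longrightarrow> (f xs, f ys) \<in> \<theta>)"

definition con :: "'a set \<Rightarrow> (nat \<times> ('a list \<Rightarrow> 'a)) set \<Rightarrow> 'a \<Rightarrow> 'a \<Rightarrow> ('a \<times> 'a) set" where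
  "con A F a b = \<Inter> {\<theta>. congruence A F \<theta> \<and> (a, b) \<in> \<theta>}"

definition Princ :: "'a set \<Rightarrow> (nat \<times> ('a list \<Rightarrow> 'a)) set \<Rightarrow> ('a \<times> 'a) set set" where
  "Princ A F = {con A F a b | a b. a \<in> A \<and> b \<in> A}"

datatype V = V0 | Valpha | Vbeta

definition leV :: "V \<Rightarrow> V \<Rightarrow> bool" where
  "leV x y \<longleftrightarrow> x = y \<or> x = V0"

end

theory Submission
  imports Defs
begin

lemma con_cong:
  assumes alg: "algebra A F" and ab: "a \<in> A" "b \<in> A"
  shows "congruence A F (con A F a b)"
proof -
  define S where "S = {\<theta>. congruence A F \<theta> \<and> (a, b) \<in> \<theta>}"
  have AA: "A \<times> A \<in> S"
    using alg ab unfolding S_def congruence_def algebra_def equiv_def refl_on_def sym_def trans_def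
    by fastforce
  have eq: "\<And>\<theta>. \<theta> \<in> S \<Longrightarrow> equiv A \<theta>" by (auto simp: S_def congruence_def)
  have sub: "\<Inter>S \<subseteq> A \<times> A" using AA by blast
  have "equiv A (\<Inter>S)"
    unfolding equiv_def refl_on_def sym_def trans_def
  proof (intro conjI)
    show "\<Inter>S \<subseteq> A \<times> A" by (rule sub)
    show "\<forall>x\<in>A. (x, x) \<in> \<Inter>S"
      using eq by (auto simp: equiv_def refl_on_def)
    show "\<forall>x y. (x, y) \<in> \<Inter>S \<longrightarrow> (y, x) \<in> \<Inter>S"
      using eq by (auto simp: equiv_def sym_def)
    show "\<forall>x y z. (x, y) \<in> \<Inter>S \<longrightarrow> (y, z) \<in> \<Inter>S \<longrightarrow> (x, z) \<in> \<Inter>S"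
      using eq unfolding equiv_def trans_def by blast
  qed
  moreover have "\<forall>(n, f) \<in> F. \<forall>xs ys. set xs \<subseteq> A \<and> set ys \<subseteq> A \<and> length xs = n \<and> length ys = n
        \<and> list_all2 (\<lambda>x y. (x, y) \<in> \<Inter>S) xs ys \<longrightarrow> (f xs, f ys) \<in> \<Inter>S"
  proof (rule ballI)
    fix p assume p: "p \<in> F"
    obtain n f where pe: "p = (n, f)" by (cases p)
    have nf: "(n, f) \<in> F" using p pe by simp
    have "\<forall>xs ys. set xs \<subseteq> A \<and> set ys \<subseteq> A \<and> length xs = n \<and> length ys = n
        \<and> list_all2 (\<lambda>x y. (x, y) \<in> \<Inter>S) xs ys \<longrightarrow> (f xs, f ys) \<in> \<Inter>S"
    proof (intro allI impI InterI)
      fix xs ys \<theta> assume h: "set xs \<subseteq> A \<and> set ys \<subseteq> A \<and> length xs = n \<and> length ys = n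
        \<and> list_all2 (\<lambda>x y. (x, y) \<in> \<Inter>S) xs ys" and t: "\<theta> \<in> S"
      have "list_all2 (\<lambda>x y. (x, y) \<in> \<theta>) xs ys"
        using h t by (auto elim: list_all2_mono)
      with t nf h show "(f xs, f ys) \<in> \<theta>" unfolding S_def congruence_def by blast
    qed
    then show "case p of (n, f) \<Rightarrow> \<forall>xs ys. set xs \<subseteq> A \<and> set ys \<subseteq> A \<and> length xs = n \<and> length ys = n
        \<and> list_all2 (\<lambda>x y. (x, y) \<in> \<Inter>S) xs ys \<longrightarrow> (f xs, f ys) \<in> \<Inter>S" using pe by simp
  qed
  ultimately have "congruence A F (\<Inter>S)" unfolding congruence_def by blast
  then show ?thesis unfolding con_def S_def by simp
qed

lemma con_mem: "(a, b) \<in> con A F a b" by (auto simp: con_def)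

lemma con_least: "congruence A F \<theta> \<Longrightarrow> (a, b) \<in> \<theta> \<Longrightarrow> con A F a b \<subseteq> \<theta>"
  by (auto simp: con_def)

lemma union_total:
  assumes P: "equiv A P" and Q: "equiv A Q" and U: "A \<times> A \<subseteq> P \<union> Q"
  shows "A \<times> A \<subseteq> P \<or> A \<times> A \<subseteq> Q"
proof (rule ccontr)
  assume "\<not> ?thesis"
  then obtain x y where xy: "x \<in> A" "y \<in> A" "(x, y) \<notin> P" by blast
  have xyQ: "(x, y) \<in> Q" using U xy by blast
  have "A \<times> A \<subseteq> Q"
  proof clarify
    fix u v assume uv: "u \<in> A" "v \<in> A"
    have xQ: "\<And>z. z \<in> A \<Longrightarrow> (x, z) \<in> Q"
    proof -
      fix z assume z: "z \<in> A"
      show "(x, z) \<in> Q"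
      proof (cases "(x, z) \<in> P")
        case True
        show ?thesis
        proof (cases "(y, z) \<in> P")
          case True
          with \<open>(x,z) \<in> P\<close> P have "(x, y) \<in> P" unfolding equiv_def sym_def trans_def by blast
          with xy show ?thesis by blast
        next
          case False
          then have "(y, z) \<in> Q" using U xy z by blast
          with xyQ Q show ?thesis unfolding equiv_def trans_def by blast
        qed
      next
        case False then show ?thesis using U xy z by blast
      qed
    qed
    have "(x, u) \<in> Q" "(x, v) \<in> Q" using xQ uv by auto
    with Q show "(u, v) \<in> Q" unfolding equiv_def sym_def trans_def by blast
  qed
  with \<open>\<not> ?thesis\<close> show False by blast
qed

theorem corollary1p2:
  fixes A :: "'a set" and F :: "(nat \<times> ('a list \<Rightarrow> 'a)) set"
  assumes "algebra A F"
  shows "\<not> (\<exists>h. bij_betw h (Princ A F) (UNIV :: V set) \<and>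
              (\<forall>x \<in> Princ A F. \<forall>y \<in> Princ A F. x \<subseteq> y \<longleftrightarrow> leV (h x) (h y)))"
proof
  assume "\<exists>h. bij_betw h (Princ A F) (UNIV :: V set) \<and>
              (\<forall>x \<in> Princ A F. \<forall>y \<in> Princ A F. x \<subseteq> y \<longleftrightarrow> leV (h x) (h y))"
  then obtain h where bij: "bij_betw h (Princ A F) (UNIV :: V set)"
    and ord: "\<forall>x \<in> Princ A F. \<forall>y \<in> Princ A F. x \<subseteq> y \<longleftrightarrow> leV (h x) (h y)" by blast
  have "Valpha \<in> h ` Princ A F" "Vbeta \<in> h ` Princ A F" using bij by (auto simp: bij_betw_def)
  then obtain P Q where PQ: "P \<in> Princ A F" "h P = Valpha" "Q \<in> Princ A F" "h Q = Vbeta"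
    by (metis imageE)
  have cong: "\<And>R. R \<in> Princ A F \<Longrightarrow> congruence A F R"
    using con_cong[OF assms] by (auto simp: Princ_def)
  have eP: "equiv A P" and eQ: "equiv A Q" using cong PQ by (auto simp: congruence_def)
  have nPQ: "\<not> P \<subseteq> Q" and nQP: "\<not> Q \<subseteq> P" using ord PQ by (auto simp: leV_def)
  have "A \<times> A \<subseteq> P \<union> Q"
  proof (rule subsetI)
    fix z assume "z \<in> A \<times> A"
    then obtain x y where zz: "z = (x, y)" and xy: "x \<in> A" "y \<in> A" by blast
    let ?R = "con A F x y"
    have R: "?R \<in> Princ A F" using xy by (auto simp: Princ_def)
    have "leV (h ?R) Valpha \<or> leV (h ?R) Vbeta" by (cases "h ?R") (auto simp: leV_def)
    then have "?R \<subseteq> P \<or> ?R \<subseteq> Q" using ord R PQ by metis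
    then show "z \<in> P \<union> Q" using con_mem[of x y A F] zz by blast
  qed
  then have "A \<times> A \<subseteq> P \<or> A \<times> A \<subseteq> Q" using union_total eP eQ by blast
  moreover have "P \<subseteq> A \<times> A" "Q \<subseteq> A \<times> A" using eP eQ by (auto simp: equiv_def refl_on_def)
  ultimately show False using nPQ nQP by blast
qed

end
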